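(* Let $n\ge2$, $0<\alpha_1\le\dots\le\alpha_m$ with $\sum\alpha_j=1$, $(A,\tau)=(\mathbb{C}p_1\oplus\cdots\oplus\mathbb{C}p_m,\tau_1)*(\mathbb{M}_n,tr_n)$ the reduced free product with $\tau_1(p_j)=\alpha_j$, $\{e_{ij}\}$ matrix units of $\mathbb{M}_n$, $u=\sum_{i=1}^{n-1}e_{i,i+1}+e_{n,1}$, $B=C^*(\{u^kp_ju^{-k}:0\le k\le n-1,1\le j\le m\}\cup\{e_{11},\dots,e_{nn}\})$, and for $l\mid n$, $1<l<n$, $E=C^*(\{u^kp_ju^{-k}:0\le k\le l-1,1\le j\le m\}\cup\{e_{11},\dots,e_{nn},u^l,\dots,u^{n-l}\})$. Let $\mathfrak{H}_A$ be the GNS Hilbert space of $\tau$ and $\mathfrak{H}_B,\mathfrak{H}_E\subset\mathfrak{H}_A$ the closures of $B\hat1$, $E\hat1$. Then (1) $u^{k_1}\mathfrak{H}_B\perp u^{k_2}\mathfrak{H}_B$ for $k_1\ne k_2$, $0\le k_1,k_2\le n-1$; (2) $u^{k_1}\mathfrak{H}_E\perp u^{k_2}\mathfrak{H}_E$ for $k_1\ne k_2$, $0\le k_1,k_2\le l-1$.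
   Context: Reduced free product: the unique unital $C^*$-algebra with state generated by unital copies of the factors, restricting to the given traces, in which they are free, with faithful GNS representation; $\tau$ is a faithful trace, and $\hat a\in\mathfrak{H}_A$ denotes the GNS vector of $a\in A$. *)

theory Defs
  imports Complex_Main
begin

text \<open>The underlying real Banach algebra carries a central
  element ii with ii*ii = -1 giving the complex structure (c x = (Re c + Im c ii) x),
  an involution cstar (conjugate linear, anti-multiplicative) and the C*-identity.\<close>

class cstar_algebra = real_normed_algebra_1 + banach +
  fixes cstar :: "'a \<Rightarrow> 'a"
    and ii :: 'a
  assumes ii_sq: "ii * ii = - 1"
    and ii_central: "ii * x = x * ii"
    and norm_scaleC: "norm ((Re c *\<^sub>R 1 + Im c *\<^sub>R ii) * x) = cmod c * norm x"
    and cstar_cstar: "cstar (cstar x) = x"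
    and cstar_add: "cstar (x + y) = cstar x + cstar y"
    and cstar_scaleR: "cstar (r *\<^sub>R x) = r *\<^sub>R cstar x"
    and cstar_ii: "cstar ii = - ii"
    and cstar_mult: "cstar (x * y) = cstar y * cstar x"
    and cstar_identity: "norm (cstar x * x) = norm x ^ 2"

definition scaleC :: "complex \<Rightarrow> 'a::cstar_algebra \<Rightarrow> 'a" where
  "scaleC c x = (Re c *\<^sub>R 1 + Im c *\<^sub>R ii) * x"

definition faithful_tracial_state :: "('a::cstar_algebra \<Rightarrow> complex) \<Rightarrow> bool" where
  "faithful_tracial_state tau \<longleftrightarrow>
     (\<forall>x y. tau (x + y) = tau x + tau y) \<and>
     (\<forall>c x. tau (scaleC c x) = c * tau x) \<and>
     (\<forall>x. Im (tau (cstar x * x)) = 0 \<and> Re (tau (cstar x * x)) \<ge> 0) \<and>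
     tau 1 = 1 \<and>
     (\<forall>x. tau (cstar x * x) = 0 \<longrightarrow> x = 0) \<and>
     (\<forall>x y. tau (x * y) = tau (y * x))"

definition cstar_subalg :: "'a::cstar_algebra set \<Rightarrow> bool" where
  "cstar_subalg T \<longleftrightarrow> 0 \<in> T \<and> (\<forall>x\<in>T. \<forall>y\<in>T. x + y \<in> T \<and> x * y \<in> T) \<and>
     (\<forall>c. \<forall>x\<in>T. scaleC c x \<in> T) \<and> (\<forall>x\<in>T. cstar x \<in> T) \<and> closed T"

definition cstar_gen :: "'a::cstar_algebra set \<Rightarrow> 'a set" where
  "cstar_gen S = \<Inter>{T. S \<subseteq> T \<and> cstar_subalg T}"

definition free_pair :: "('a::cstar_algebra \<Rightarrow> complex) \<Rightarrow> 'a set \<Rightarrow> 'a set \<Rightarrow> bool" where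
  "free_pair tau D1 D2 \<longleftrightarrow>
     (\<forall>xs :: (bool \<times> 'a) list. xs \<noteq> [] \<longrightarrow>
        (\<forall>(b, a) \<in> set xs. a \<in> (if b then D1 else D2) \<and> tau a = 0) \<longrightarrow>
        (\<forall>i. Suc i < length xs \<longrightarrow> fst (xs ! i) \<noteq> fst (xs ! Suc i)) \<longrightarrow>
        tau (prod_list (map snd xs)) = 0)"

text \<open>GNS Hilbert space of tau: completion of A w.r.t. <x,y> = tau(y* x).
  A vector of the closure of S\<hat>1 is represented by a 2-norm Cauchy sequence in S.\<close>
definition gns_norm :: "('a::cstar_algebra \<Rightarrow> complex) \<Rightarrow> 'a \<Rightarrow> real" where
  "gns_norm tau x = sqrt (Re (tau (cstar x * x)))"

definition gns_cauchy :: "('a::cstar_algebra \<Rightarrow> complex) \<Rightarrow> (nat \<Rightarrow> 'a) \<Rightarrow> bool" where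
  "gns_cauchy tau X \<longleftrightarrow> (\<forall>\<epsilon>>0. \<exists>N. \<forall>i\<ge>N. \<forall>j\<ge>N. gns_norm tau (X i - X j) < \<epsilon>)"

text \<open>a (closure of S\<hat>1) is orthogonal to b (closure of T\<hat>1) in the GNS space,
  a, b acting by (the continuous extension of) left multiplication.\<close>
definition gns_perp ::
  "('a::cstar_algebra \<Rightarrow> complex) \<Rightarrow> 'a \<Rightarrow> 'a set \<Rightarrow> 'a \<Rightarrow> 'a set \<Rightarrow> bool" where
  "gns_perp tau a S b T \<longleftrightarrow>
     (\<forall>X Y. range X \<subseteq> S \<longrightarrow> range Y \<subseteq> T \<longrightarrow> gns_cauchy tau X \<longrightarrow> gns_cauchy tau Y \<longrightarrow>
        (\<lambda>i. tau (cstar (b * Y i) * (a * X i))) \<longlonglongrightarrow> 0)"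

definition cyc_shift :: "nat \<Rightarrow> (nat \<Rightarrow> nat \<Rightarrow> 'a::cstar_algebra) \<Rightarrow> 'a" where
  "cyc_shift n e = (\<Sum>i=1..n-1. e i (Suc i)) + e n 1"

end

theory Submission imports Defs "HOL-Analysis.Analysis" "HOL-Computational_Algebra.Formal_Power_Series" begin


definition cz :: "complex \<Rightarrow> 'a::cstar_algebra" where
  "cz c = Re c *\<^sub>R 1 + Im c *\<^sub>R ii"

lemma scaleC_cz: "scaleC c x = cz c * x"
  by (simp add: scaleC_def cz_def)

lemma cz_central: "cz c * (x::'a::cstar_algebra) = x * cz c"
  by (simp add: cz_def algebra_simps ii_central)

lemma cz_mult: "cz (a * b) = (cz a * cz b :: 'a::cstar_algebra)"
  by (simp add: cz_def algebra_simps ii_sq scaleR_add_left[symmetric] del: scaleR_add_left)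

lemma cz_add: "cz (a + b) = (cz a + cz b :: 'a::cstar_algebra)"
  by (simp add: cz_def algebra_simps)

lemma cz_diff: "cz (a - b) = (cz a - cz b :: 'a::cstar_algebra)"
  by (simp add: cz_def algebra_simps)

lemma cz_one[simp]: "cz 1 = (1::'a::cstar_algebra)"
  by (simp add: cz_def)

lemma cz_zero[simp]: "cz 0 = (0::'a::cstar_algebra)"
  by (simp add: cz_def)

lemma cz_of_real: "cz (of_real r) = (r *\<^sub>R 1 :: 'a::cstar_algebra)"
  by (simp add: cz_def)

lemma cz_sum: "cz (sum f A) = (\<Sum>i\<in>A. cz (f i) :: 'a::cstar_algebra)"
  by (induction A rule: infinite_finite_induct) (auto simp: cz_add)

lemma cstar_zero[simp]: "cstar 0 = (0::'a::cstar_algebra)"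
  using cstar_scaleR[of 0 "0::'a"] by simp

lemma cstar_minus: "cstar (- x) = - cstar (x::'a::cstar_algebra)"
  using cstar_scaleR[of "-1" x] by simp

lemma cstar_diff: "cstar (x - y) = cstar x - cstar (y::'a::cstar_algebra)"
  using cstar_add[of x "-y"] by (simp add: cstar_minus)

lemma cstar_sum: "cstar (sum f A) = (\<Sum>i\<in>A. cstar (f i) :: 'a::cstar_algebra)"
  by (induction A rule: infinite_finite_induct) (auto simp: cstar_add)

lemma cstar_one[simp]: "cstar 1 = (1::'a::cstar_algebra)"
proof -
  have "cstar 1 * y = y" for y :: 'a
  proof -
    have "cstar (cstar 1 * y) = cstar y" by (simp add: cstar_mult cstar_cstar)
    then show ?thesis by (metis cstar_cstar)
  qed
  from this[of 1] show ?thesis by simp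
qed

lemma cstar_cz: "cstar (cz c) = (cz (cnj c) :: 'a::cstar_algebra)"
  by (simp add: cz_def cstar_add cstar_scaleR cstar_ii)

lemma cstar_scaleC: "cstar (scaleC c x) = scaleC (cnj c) (cstar (x::'a::cstar_algebra))"
  by (simp add: scaleC_cz cstar_mult cstar_cz cz_central)

lemma cstar_power: "cstar (x ^ k) = (cstar x) ^ k" for x :: "'a::cstar_algebra"
  by (induction k) (auto simp: cstar_mult power_commutes)

lemma cstar_prod_list: "cstar (prod_list xs) = prod_list (rev (map cstar xs))" for xs :: "'a::cstar_algebra list"
  by (induction xs) (auto simp: cstar_mult)

lemma norm_cstar_le: "norm (x::'a::cstar_algebra) \<le> norm (cstar x)"
proof (cases "x = 0")
  case False
  have "norm x ^ 2 = norm (cstar x * x)" by (simp add: cstar_identity)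
  also have "\<dots> \<le> norm (cstar x) * norm x" by (rule norm_mult_ineq)
  finally have "norm x * norm x \<le> norm (cstar x) * norm x" by (simp add: power2_eq_square)
  with False show ?thesis by simp
qed simp

lemma norm_cstar[simp]: "norm (cstar x) = norm (x::'a::cstar_algebra)"
  using norm_cstar_le[of x] norm_cstar_le[of "cstar x"] by (simp add: cstar_cstar)

lemma bounded_linear_cstar: "bounded_linear (cstar :: 'a::cstar_algebra \<Rightarrow> 'a)"
  by (rule bounded_linear_intro[where K=1]) (auto simp: cstar_add cstar_scaleR)

lemma norm_cz: "norm (cz c :: 'a::cstar_algebra) = cmod c"
  using norm_scaleC[of c "1::'a"] by (simp add: cz_def)

lemma scaleC_mult_left: "scaleC c x * y = scaleC c (x * y)" for x :: "'a::cstar_algebra"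
  by (simp add: scaleC_cz mult.assoc)
lemma scaleC_mult_right: "x * scaleC c y = scaleC c (x * y)" for x :: "'a::cstar_algebra"
  by (metis scaleC_cz cz_central mult.assoc)
lemma scaleC_scaleC: "scaleC a (scaleC b x) = scaleC (a * b) (x::'a::cstar_algebra)"
  by (simp add: scaleC_cz cz_mult mult.assoc)
lemma scaleC_add_right: "scaleC c (x + y) = scaleC c x + scaleC c (y::'a::cstar_algebra)"
  by (simp add: scaleC_cz distrib_left)
lemma scaleC_diff_right: "scaleC c (x - y) = scaleC c x - scaleC c (y::'a::cstar_algebra)"
  by (simp add: scaleC_cz right_diff_distrib)
lemma scaleC_add_left: "scaleC (a + b) x = scaleC a x + scaleC b (x::'a::cstar_algebra)"
  by (simp add: scaleC_cz cz_add distrib_right)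
lemma scaleC_diff_left: "scaleC (a - b) x = scaleC a x - scaleC b (x::'a::cstar_algebra)"
  by (simp add: scaleC_cz cz_diff left_diff_distrib)
lemma scaleC_one[simp]: "scaleC 1 x = (x::'a::cstar_algebra)"
  by (simp add: scaleC_cz)
lemma scaleC_zero[simp]: "scaleC 0 x = (0::'a::cstar_algebra)"
  by (simp add: scaleC_cz)
lemma scaleC_zero_right[simp]: "scaleC c 0 = (0::'a::cstar_algebra)"
  by (simp add: scaleC_cz)
lemma scaleC_minus_left: "scaleC (- a) x = - scaleC a (x::'a::cstar_algebra)"
  using scaleC_diff_left[of 0 a x] by simp
lemma scaleC_minus_right: "scaleC a (- x) = - scaleC a (x::'a::cstar_algebra)"
  using scaleC_diff_right[of a 0 x] by simp
lemma scaleC_sum_left: "scaleC (sum f A) x = (\<Sum>i\<in>A. scaleC (f i) x :: 'a::cstar_algebra)"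
  by (simp add: scaleC_cz cz_sum sum_distrib_right)
lemma scaleC_sum_right: "scaleC c (sum f A) = (\<Sum>i\<in>A. scaleC c (f i) :: 'a::cstar_algebra)"
  by (simp add: scaleC_cz sum_distrib_left)
lemma scaleC_of_real: "scaleC (of_real r) x = r *\<^sub>R (x::'a::cstar_algebra)"
  by (simp add: scaleC_cz cz_of_real)
lemma norm_scaleC': "norm (scaleC c x) = cmod c * norm (x::'a::cstar_algebra)"
  by (simp add: scaleC_def norm_scaleC)




lemma sqrt_exists:
  fixes h :: "'a::cstar_algebra"
  assumes sa: "cstar h = h" and nh: "norm h < 1"
  shows "\<exists>s. cstar s = s \<and> s * s = 1 - h"
proof -
  define g where "g = - h"
  define c where "c = (\<lambda>k. ((1/2::real) gchoose k))"
  define a where "a = (\<lambda>k. c k *\<^sub>R g ^ k)"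
  have ng: "norm g < 1" using nh by (simp add: g_def)
  have cg: "cstar g = g" using sa by (simp add: g_def cstar_minus)
  have nN: "(1/2::real) \<notin> \<nat>"
  proof
    assume "(1/2::real) \<in> \<nat>"
    then obtain k :: nat where "1/2 = real k" by (auto elim: Nats_cases)
    then have "real (2*k) = 1" by simp
    then have "2*k = 1" by linarith
    then show False by presburger
  qed
  have cr: "conv_radius c = 1" using conv_radius_gchoose[of "1/2::real"] nN by (simp add: c_def)
  have sr: "summable (\<lambda>k. norm (c k * norm g ^ k))"
    by (rule abs_summable_in_conv_radius) (use cr ng in simp)
  have sa': "summable (\<lambda>k. norm (a k))"
  proof (rule summable_comparison_test[OF _ sr])
    show "\<exists>N. \<forall>k\<ge>N. norm (norm (a k)) \<le> norm (c k * norm g ^ k)"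
    proof (intro exI allI impI)
      fix k :: nat
      have "norm (norm (a k)) = \<bar>c k\<bar> * norm (g ^ k)" by (simp add: a_def)
      also have "\<dots> \<le> \<bar>c k\<bar> * norm g ^ k" by (intro mult_left_mono norm_power_ineq) auto
      also have "\<dots> = norm (c k * norm g ^ k)" by (simp add: abs_mult)
      finally show "norm (norm (a k)) \<le> norm (c k * norm g ^ k)" .
    qed
  qed
  define s where "s = suminf a"
  have "s * s = (\<Sum>k. \<Sum>i\<le>k. a i * a (k - i))"
    unfolding s_def by (rule Cauchy_product[OF sa' sa'])
  also have "(\<lambda>k. \<Sum>i\<le>k. a i * a (k - i)) = (\<lambda>k. ((1::real) gchoose k) *\<^sub>R g ^ k)"
  proof
    fix k :: nat
    have "(\<Sum>i\<le>k. a i * a (k - i)) = (\<Sum>i\<le>k. (c i * c (k - i)) *\<^sub>R g ^ k)"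
    proof (rule sum.cong)
      fix i assume "i \<in> {..k}"
      then have "g ^ i * g ^ (k - i) = g ^ k" by (simp add: power_add[symmetric])
      then show "a i * a (k - i) = (c i * c (k - i)) *\<^sub>R g ^ k" by (simp add: a_def)
    qed simp
    also have "\<dots> = (\<Sum>i\<le>k. c i * c (k - i)) *\<^sub>R g ^ k" by (simp add: scaleR_sum_left)
    also have "(\<Sum>i\<le>k. c i * c (k - i)) = (1::real) gchoose k"
      using gbinomial_Vandermonde[of "1/2::real" "1/2" k] by (simp add: c_def atMost_atLeast0)
    finally show "(\<Sum>i\<le>k. a i * a (k - i)) = ((1::real) gchoose k) *\<^sub>R g ^ k" .
  qed
  also have "(\<Sum>k. ((1::real) gchoose k) *\<^sub>R g ^ k) = (\<Sum>k\<in>{0,1}. ((1::real) gchoose k) *\<^sub>R g ^ k)"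
  proof (rule suminf_finite)
    fix k :: nat assume "k \<notin> {0,1}"
    then have "k > 1" by auto
    have "((1::real) gchoose k) = real (1 choose k)" using binomial_gbinomial[of 1 k, where 'a=real] by simp
    also have "\<dots> = 0" using \<open>k > 1\<close> by simp
    finally show "((1::real) gchoose k) *\<^sub>R g ^ k = 0" by simp
  qed simp
  also have "\<dots> = 1 - h" by (simp add: g_def)
  finally have ss: "s * s = 1 - h" .
  have "cstar s = (\<Sum>k. cstar (a k))"
    unfolding s_def by (rule bounded_linear.suminf[OF bounded_linear_cstar summable_norm_cancel[OF sa']])
  also have "(\<lambda>k. cstar (a k)) = a" by (auto simp: a_def cstar_scaleR cstar_power cg)
  finally have "cstar s = s" by (simp add: s_def)
  with ss show ?thesis by blast
qed

locale ftau =
  fixes tau :: "'a::cstar_algebra \<Rightarrow> complex"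
  assumes fts: "faithful_tracial_state tau"
begin

lemma tau_add: "tau (x + y) = tau x + tau y" using fts unfolding faithful_tracial_state_def by blast
lemma tau_scaleC: "tau (scaleC c x) = c * tau x" using fts unfolding faithful_tracial_state_def by blast
lemma tau_one[simp]: "tau 1 = 1" using fts unfolding faithful_tracial_state_def by blast
lemma tau_pos_im: "Im (tau (cstar x * x)) = 0" using fts unfolding faithful_tracial_state_def by blast
lemma tau_pos_re: "Re (tau (cstar x * x)) \<ge> 0" using fts unfolding faithful_tracial_state_def by blast
lemma tau_trace: "tau (x * y) = tau (y * x)" using fts unfolding faithful_tracial_state_def by blast
lemma tau_zero[simp]: "tau 0 = 0" using tau_scaleC[of 0 0] by simp
lemma tau_minus: "tau (- x) = - tau x"
proof -
  have "tau x + tau (-x) = 0" using tau_add[of x "-x"] by simp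
  then show ?thesis by (simp add: add_eq_0_iff)
qed
lemma tau_diff: "tau (x - y) = tau x - tau y" using tau_add[of x "-y"] by (simp add: tau_minus)
lemma tau_sum: "tau (sum f A) = (\<Sum>i\<in>A. tau (f i))"
  by (induction A rule: infinite_finite_induct) (auto simp: tau_add)
lemma tau_scaleR: "tau (r *\<^sub>R x) = of_real r * tau x"
  using tau_scaleC[of "of_real r" x] by (simp add: scaleC_of_real)
lemma tau_cz: "tau (cz c) = c" using tau_scaleC[of c 1] by (simp add: scaleC_cz)

lemma tau_sa_real: assumes "cstar h = h" shows "Im (tau h) = 0"
proof -
  have "cstar (1 + h) * (1 + h) = 1 + h + h + cstar h * h" using assms
    by (simp add: cstar_add algebra_simps)
  then have "tau (cstar (1 + h) * (1 + h)) = 1 + tau h + tau h + tau (cstar h * h)"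
    by (simp add: tau_add)
  then have "Im (tau (cstar (1 + h) * (1 + h))) = 2 * Im (tau h) + Im (tau (cstar h * h))" by simp
  then show ?thesis using tau_pos_im[of "1+h"] tau_pos_im[of h] by simp
qed

lemma tau_sa_le1: assumes "cstar h = h" "norm h < 1" shows "Re (tau h) \<le> 1"
proof -
  obtain s where s: "cstar s = s" "s * s = 1 - h" using sqrt_exists[OF assms] by blast
  have "tau (cstar s * s) = 1 - tau h" using s by (simp add: tau_diff)
  then show ?thesis using tau_pos_re[of s] by simp
qed

lemma tau_sa_le: assumes "cstar h = h" shows "Re (tau h) \<le> norm h"
proof (rule dense_ge)
  fix r assume r: "norm h < r"
  then have rp: "r > 0" using norm_ge_zero[of h] by linarith
  have "cstar ((1/r) *\<^sub>R h) = (1/r) *\<^sub>R h" using assms by (simp add: cstar_scaleR)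
  moreover have "norm ((1/r) *\<^sub>R h) < 1" using r rp by (simp add: field_simps)
  ultimately have "Re (tau ((1/r) *\<^sub>R h)) \<le> 1" by (rule tau_sa_le1)
  then have "Re (tau h) / r \<le> 1" by (simp add: tau_scaleR)
  then show "Re (tau h) \<le> r" using rp by (simp add: field_simps)
qed

lemma tau_sa_abs: assumes "cstar h = h" shows "cmod (tau h) \<le> norm h"
proof -
  have "Re (tau h) \<le> norm h" using tau_sa_le[OF assms] .
  moreover have "Re (tau (- h)) \<le> norm (- h)" using assms by (intro tau_sa_le) (simp add: cstar_minus)
  ultimately have "\<bar>Re (tau h)\<bar> \<le> norm h" by (simp add: tau_minus)
  moreover have "cmod (tau h) = \<bar>Re (tau h)\<bar>" using tau_sa_real[OF assms] by (simp add: cmod_eq_Re)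
  ultimately show ?thesis by simp
qed

lemma tau_bound: "cmod (tau x) \<le> 2 * norm x"
proof -
  define h where "h = (1/2::real) *\<^sub>R (x + cstar x)"
  define k where "k = scaleC (- \<i>/2) (x - cstar x)"
  have hsa: "cstar h = h" by (simp add: h_def cstar_scaleR cstar_add cstar_cstar add.commute)
  have ksa: "cstar k = k"
  proof -
    have "cstar k = scaleC (\<i>/2) (cstar x - x)" by (simp add: k_def cstar_scaleC cstar_diff cstar_cstar)
    also have "\<dots> = scaleC (-(-\<i>/2)) (-(x - cstar x))" by simp
    also have "\<dots> = k" by (simp only: k_def scaleC_minus_left scaleC_minus_right minus_minus)
    finally show ?thesis .
  qed
  have nh: "norm h \<le> norm x"
  proof -
    have "norm h = (1/2) * norm (x + cstar x)" by (simp add: h_def)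
    also have "\<dots> \<le> (1/2) * (norm x + norm (cstar x))" by (intro mult_left_mono norm_triangle_ineq) auto
    finally show ?thesis by simp
  qed
  have nk: "norm k \<le> norm x"
  proof -
    have "norm k = (1/2) * norm (x - cstar x)" by (simp add: k_def norm_scaleC' norm_divide)
    also have "\<dots> \<le> (1/2) * (norm x + norm (cstar x))" by (intro mult_left_mono norm_triangle_ineq4) auto
    finally show ?thesis by simp
  qed
  have xe: "x = h + scaleC \<i> k"
  proof -
    have "scaleC \<i> k = scaleC (\<i> * (- \<i>/2)) (x - cstar x)" by (simp add: k_def scaleC_scaleC)
    also have "\<i> * (- \<i>/2) = complex_of_real (1/2)" by simp
    finally have "scaleC \<i> k = (1/2::real) *\<^sub>R (x - cstar x)" by (simp only: scaleC_of_real)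
    then have "h + scaleC \<i> k = (1/2::real) *\<^sub>R ((x + cstar x) + (x - cstar x))"
      by (simp only: h_def scaleR_add_right)
    also have "(x + cstar x) + (x - cstar x) = (2::real) *\<^sub>R x" by (simp add: scaleR_2)
    finally show ?thesis by simp
  qed
  have "tau x = tau h + \<i> * tau k" by (subst xe) (simp add: tau_add tau_scaleC)
  then have "cmod (tau x) \<le> cmod (tau h) + cmod (tau k)"
    by (metis norm_triangle_ineq norm_mult norm_ii mult_1)
  also have "\<dots> \<le> norm x + norm x" using tau_sa_abs[OF hsa] tau_sa_abs[OF ksa] nh nk by linarith
  finally show ?thesis by simp
qed

lemma bounded_linear_tau: "bounded_linear tau"
proof (rule bounded_linear_intro[where K=2])
  fix x show "cmod (tau x) \<le> norm x * 2" using tau_bound[of x] by (simp add: mult.commute)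
next
  fix r x show "tau (r *\<^sub>R x) = r *\<^sub>R tau x" using tau_scaleR[of r x] by (simp add: scaleR_conv_of_real)
qed (simp add: tau_add)

lemma tau_tendsto: "X \<longlonglongrightarrow> x \<Longrightarrow> (\<lambda>i. tau (X i)) \<longlonglongrightarrow> tau x"
  by (rule bounded_linear.tendsto[OF bounded_linear_tau])

lemma tau_closure_zero: assumes "\<forall>y\<in>S. tau y = 0" "x \<in> closure S" shows "tau x = 0"
proof -
  obtain X where X: "\<And>i. X i \<in> S" "X \<longlonglongrightarrow> x" using assms(2) by (auto simp: closure_sequential)
  have "(\<lambda>i. tau (X i)) \<longlonglongrightarrow> tau x" by (rule tau_tendsto[OF X(2)])
  moreover have "(\<lambda>i. tau (X i)) = (\<lambda>i. 0)" using X(1) assms(1) by auto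
  ultimately have "(\<lambda>i. 0::complex) \<longlonglongrightarrow> tau x" by simp
  from LIMSEQ_unique[OF tendsto_const this] show ?thesis by simp
qed

end



lemma sum_prod_scaleC:
  fixes x y :: "'i \<Rightarrow> 'a::cstar_algebra"
  shows "(\<Sum>j\<in>A. scaleC (c j) (x j)) * (\<Sum>k\<in>B. scaleC (d k) (y k)) =
         (\<Sum>j\<in>A. \<Sum>k\<in>B. scaleC (c j * d k) (x j * y k))"
  by (simp only: sum_product scaleC_mult_left scaleC_mult_right scaleC_scaleC) (simp add: mult.commute)

locale fa = ftau tau for tau :: "'a::cstar_algebra \<Rightarrow> complex" +
  fixes n m :: nat and p :: "nat \<Rightarrow> 'a" and e :: "nat \<Rightarrow> nat \<Rightarrow> 'a"
  assumes n2: "n \<ge> 2"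
    and p_proj: "\<forall>j\<in>{1..m}. p j * p j = p j \<and> cstar (p j) = p j"
    and p_orth: "\<forall>j\<in>{1..m}. \<forall>k\<in>{1..m}. j \<noteq> k \<longrightarrow> p j * p k = 0"
    and p_sum: "(\<Sum>j=1..m. p j) = 1"
    and e_mult: "\<forall>i\<in>{1..n}. \<forall>j\<in>{1..n}. \<forall>k\<in>{1..n}. \<forall>l\<in>{1..n}.
                   e i j * e k l = (if j = k then e i l else 0)"
    and e_adj: "\<forall>i\<in>{1..n}. \<forall>j\<in>{1..n}. cstar (e i j) = e j i"
    and e_sum: "(\<Sum>i=1..n. e i i) = 1"
    and tau_e: "\<forall>i\<in>{1..n}. \<forall>j\<in>{1..n}. tau (e i j) = (if i = j then 1 / of_nat n else 0)"
    and free: "free_pair tau {\<Sum>j=1..m. scaleC (c j) (p j) | c. True}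
                            {\<Sum>i=1..n. \<Sum>j=1..n. scaleC (c i j) (e i j) | c. True}"
begin

definition PP :: "'a set" where
  "PP = {\<Sum>j=1..m. scaleC (c j) (p j) | c. True}"

definition HH :: "int \<Rightarrow> 'a set" where
  "HH d = {\<Sum>i=1..n. \<Sum>j=1..n. scaleC (c i j) (e i j) | c.
             \<forall>i j. c i j \<noteq> 0 \<longrightarrow> int n dvd (int i - int j - d)}"

lemma PP_I: "x = (\<Sum>j=1..m. scaleC (c j) (p j)) \<Longrightarrow> x \<in> PP"
  unfolding PP_def by blast

lemma HH_I: "x = (\<Sum>i=1..n. \<Sum>j=1..n. scaleC (c i j) (e i j)) \<Longrightarrow>
    (\<And>i j. c i j \<noteq> 0 \<Longrightarrow> int n dvd (int i - int j - d)) \<Longrightarrow> x \<in> HH d"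
  unfolding HH_def by blast

lemma PP_mult: assumes "x \<in> PP" "y \<in> PP" shows "x * y \<in> PP"
proof -
  obtain c d where x: "x = (\<Sum>j=1..m. scaleC (c j) (p j))" and y: "y = (\<Sum>j=1..m. scaleC (d j) (p j))"
    using assms by (auto simp: PP_def)
  have "x * y = (\<Sum>j=1..m. \<Sum>k=1..m. scaleC (c j * d k) (p j * p k))"
    unfolding x y by (rule sum_prod_scaleC)
  also have "\<dots> = (\<Sum>j=1..m. scaleC (c j * d j) (p j))"
  proof (rule sum.cong[OF refl])
    fix j assume j: "j \<in> {1..m}"
    have "(\<Sum>k=1..m. scaleC (c j * d k) (p j * p k)) = (\<Sum>k=1..m. if k = j then scaleC (c j * d j) (p j) else 0)"
      using j p_proj p_orth by (intro sum.cong) auto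
    also have "\<dots> = scaleC (c j * d j) (p j)" using j by (simp add: sum.delta)
    finally show "(\<Sum>k=1..m. scaleC (c j * d k) (p j * p k)) = scaleC (c j * d j) (p j)" .
  qed
  finally show ?thesis by (auto simp: PP_def)
qed

lemma PP_center: assumes "x \<in> PP" shows "x - scaleC t 1 \<in> PP"
proof -
  obtain c where x: "x = (\<Sum>j=1..m. scaleC (c j) (p j))" using assms by (auto simp: PP_def)
  have "x - scaleC t 1 = (\<Sum>j=1..m. scaleC (c j - t) (p j))"
    unfolding x p_sum[symmetric] by (simp add: scaleC_sum_right scaleC_diff_left sum_subtractf)
  then show ?thesis by (auto simp: PP_def)
qed

lemma PP_cstar: assumes "x \<in> PP" shows "cstar x \<in> PP"
proof -
  obtain c where x: "x = (\<Sum>j=1..m. scaleC (c j) (p j))" using assms by (auto simp: PP_def)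
  have "cstar x = (\<Sum>j=1..m. scaleC (cnj (c j)) (p j))"
    unfolding x using p_proj by (simp add: cstar_sum cstar_scaleC)
  then show ?thesis by (auto simp: PP_def)
qed

lemma p_PP: "j \<in> {1..m} \<Longrightarrow> p j \<in> PP"
proof -
  assume j: "j \<in> {1..m}"
  have "p j = (\<Sum>k=1..m. scaleC (if k = j then 1 else 0) (p k))"
    using j by (simp add: sum.delta if_distrib[of "\<lambda>c. scaleC c _"] cong: if_cong)
  then show ?thesis by (rule PP_I)
qed

lemma one_HH0: "1 = (\<Sum>i=1..n. \<Sum>j=1..n. scaleC (if i = j then 1 else 0) (e i j))"
proof -
  have "(\<Sum>i=1..n. \<Sum>j=1..n. scaleC (if i = j then 1 else 0) (e i j)) = (\<Sum>i=1..n. e i i)"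
  proof (rule sum.cong[OF refl])
    fix i assume "i \<in> {1..n}"
    then show "(\<Sum>j=1..n. scaleC (if i = j then 1 else 0) (e i j)) = e i i"
      by (simp add: if_distrib[of "\<lambda>c. scaleC c _"] sum.delta cong: if_cong)
  qed
  then show ?thesis using e_sum by simp
qed

lemma HH_one: "1 \<in> HH 0"
  by (rule HH_I[OF one_HH0]) (auto split: if_splits)

lemma e_HH: "i \<in> {1..n} \<Longrightarrow> j \<in> {1..n} \<Longrightarrow> e i j \<in> HH (int i - int j)"
proof -
  assume i: "i \<in> {1..n}" and j: "j \<in> {1..n}"
  have "e i j = (\<Sum>a=1..n. \<Sum>b=1..n. scaleC (if a = i \<and> b = j then 1 else 0) (e a b))"
  proof -
    have "(\<Sum>a=1..n. \<Sum>b=1..n. scaleC (if a = i \<and> b = j then 1 else 0) (e a b))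
        = (\<Sum>a=1..n. if a = i then e i j else 0)"
      using j by (intro sum.cong refl) (auto simp: if_distrib[of "\<lambda>c. scaleC c _"] sum.delta' cong: if_cong)
    also have "\<dots> = e i j" using i by (simp add: sum.delta')
    finally show ?thesis by simp
  qed
  then show ?thesis by (rule HH_I) (auto split: if_splits)
qed

lemma HH_mult: assumes "x \<in> HH d" "y \<in> HH d'" shows "x * y \<in> HH (d + d')"
proof -
  obtain c where x: "x = (\<Sum>i=1..n. \<Sum>j=1..n. scaleC (c i j) (e i j))"
    and c: "\<forall>i j. c i j \<noteq> 0 \<longrightarrow> int n dvd (int i - int j - d)"
    using assms(1) by (auto simp: HH_def)
  obtain c' where y: "y = (\<Sum>i=1..n. \<Sum>j=1..n. scaleC (c' i j) (e i j))"
    and c': "\<forall>i j. c' i j \<noteq> 0 \<longrightarrow> int n dvd (int i - int j - d')"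
    using assms(2) by (auto simp: HH_def)
  define c'' where "c'' i l = (\<Sum>j=1..n. c i j * c' j l)" for i l
  have "x * y = (\<Sum>i=1..n. \<Sum>j=1..n. scaleC (c i j) (e i j * y))"
    by (simp only: x sum_distrib_right scaleC_mult_left)
  also have "\<dots> = (\<Sum>i=1..n. \<Sum>j=1..n. scaleC (c i j) (\<Sum>l=1..n. scaleC (c' j l) (e i l)))"
  proof (intro sum.cong refl arg_cong[where f="scaleC _"])
    fix i j assume i: "i \<in> {1..n}" and j: "j \<in> {1..n}"
    have "e i j * y = (\<Sum>k=1..n. \<Sum>l=1..n. scaleC (c' k l) (e i j * e k l))"
      by (simp only: y sum_distrib_left scaleC_mult_right)
    also have "\<dots> = (\<Sum>k=1..n. if k = j then (\<Sum>l=1..n. scaleC (c' j l) (e i l)) else 0)"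
      using i j e_mult by (intro sum.cong refl) auto
    also have "\<dots> = (\<Sum>l=1..n. scaleC (c' j l) (e i l))" using j by (simp add: sum.delta')
    finally show "e i j * y = (\<Sum>l=1..n. scaleC (c' j l) (e i l))" .
  qed
  also have "\<dots> = (\<Sum>i=1..n. \<Sum>j=1..n. \<Sum>l=1..n. scaleC (c i j * c' j l) (e i l))"
    by (simp only: scaleC_sum_right scaleC_scaleC)
  also have "\<dots> = (\<Sum>i=1..n. \<Sum>l=1..n. \<Sum>j=1..n. scaleC (c i j * c' j l) (e i l))"
    by (intro sum.cong refl sum.swap)
  also have "\<dots> = (\<Sum>i=1..n. \<Sum>l=1..n. scaleC (c'' i l) (e i l))"
    by (simp only: c''_def scaleC_sum_left)
  finally have xy: "x * y = (\<Sum>i=1..n. \<Sum>l=1..n. scaleC (c'' i l) (e i l))" .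
  have "\<forall>i l. c'' i l \<noteq> 0 \<longrightarrow> int n dvd (int i - int l - (d + d'))"
  proof (intro allI impI)
    fix i l assume "c'' i l \<noteq> 0"
    then obtain j where "c i j * c' j l \<noteq> 0" unfolding c''_def by (meson sum.neutral)
    then have "int n dvd (int i - int j - d)" "int n dvd (int j - int l - d')" using c c' by auto
    then have "int n dvd ((int i - int j - d) + (int j - int l - d'))" by (rule dvd_add)
    then show "int n dvd (int i - int l - (d + d'))" by (simp add: algebra_simps)
  qed
  with xy show ?thesis by (intro HH_I[of _ c'']) auto
qed

lemma HH_center: assumes "x \<in> HH d" "int n dvd d" shows "x - scaleC t 1 \<in> HH d"
proof -
  obtain c where x: "x = (\<Sum>i=1..n. \<Sum>j=1..n. scaleC (c i j) (e i j))"
    and c: "\<forall>i j. c i j \<noteq> 0 \<longrightarrow> int n dvd (int i - int j - d)"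
    using assms(1) by (auto simp: HH_def)
  have "x - scaleC t 1 = (\<Sum>i=1..n. \<Sum>j=1..n. scaleC (c i j - t * (if i = j then 1 else 0)) (e i j))"
    unfolding x by (subst one_HH0) (simp add: scaleC_sum_right scaleC_scaleC scaleC_diff_left sum_subtractf)
  then show ?thesis
    by (rule HH_I) (use c assms(2) in \<open>auto split: if_splits\<close>)
qed

lemma HH_tau: assumes "x \<in> HH d" "tau x \<noteq> 0" shows "int n dvd d"
proof (rule ccontr)
  assume nd: "\<not> int n dvd d"
  obtain c where x: "x = (\<Sum>i=1..n. \<Sum>j=1..n. scaleC (c i j) (e i j))"
    and c: "\<forall>i j. c i j \<noteq> 0 \<longrightarrow> int n dvd (int i - int j - d)"
    using assms(1) by (auto simp: HH_def)
  have "tau x = (\<Sum>i=1..n. \<Sum>j=1..n. c i j * tau (e i j))"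
    unfolding x by (simp add: tau_sum tau_scaleC)
  also have "\<dots> = 0"
  proof (intro sum.neutral ballI)
    fix i j assume i: "i \<in> {1..n}" and j: "j \<in> {1..n}"
    show "c i j * tau (e i j) = 0"
    proof (cases "i = j")
      case True
      then have "c i j = 0" using c nd by (metis diff_self diff_0 dvd_minus_iff)
      then show ?thesis by simp
    next
      case False then show ?thesis using tau_e i j by simp
    qed
  qed
  finally show False using assms(2) by simp
qed

lemma HH_cstar: assumes "x \<in> HH d" shows "cstar x \<in> HH (- d)"
proof -
  obtain c where x: "x = (\<Sum>i=1..n. \<Sum>j=1..n. scaleC (c i j) (e i j))"
    and c: "\<forall>i j. c i j \<noteq> 0 \<longrightarrow> int n dvd (int i - int j - d)"
    using assms(1) by (auto simp: HH_def)
  have "cstar x = (\<Sum>i=1..n. \<Sum>j=1..n. scaleC (cnj (c i j)) (e j i))"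
    unfolding x using e_adj by (simp add: cstar_sum cstar_scaleC)
  also have "\<dots> = (\<Sum>j=1..n. \<Sum>i=1..n. scaleC (cnj (c i j)) (e j i))" by (rule sum.swap)
  finally have "cstar x = (\<Sum>i=1..n. \<Sum>j=1..n. scaleC ((\<lambda>a b. cnj (c b a)) i j) (e i j))" by simp
  moreover have "\<forall>i j. cnj (c j i) \<noteq> 0 \<longrightarrow> int n dvd (int i - int j - (- d))"
  proof (intro allI impI)
    fix i j assume "cnj (c j i) \<noteq> 0"
    then have "int n dvd (int j - int i - d)" using c by auto
    moreover have eq: "int i - int j - (- d) = - (int j - int i - d)" by simp
    ultimately show "int n dvd (int i - int j - (- d))" by (simp only: eq dvd_minus_iff)
  qed
  ultimately show ?thesis by (intro HH_I[of _ "\<lambda>a b. cnj (c b a)"]) auto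
qed

lemma u_HH: "cyc_shift n e \<in> HH (-1)"
proof -
  define tg where "tg i = (if i < n then Suc i else 1)" for i
  define c where "c i j = (if i \<in> {1..n} \<and> j = tg i then (1::complex) else 0)" for i j
  have "(\<Sum>i=1..n. \<Sum>j=1..n. scaleC (c i j) (e i j)) = (\<Sum>i=1..n. e i (tg i))"
  proof (rule sum.cong[OF refl])
    fix i assume i: "i \<in> {1..n}"
    then have "tg i \<in> {1..n}" by (auto simp: tg_def)
    then show "(\<Sum>j=1..n. scaleC (c i j) (e i j)) = e i (tg i)"
      using i by (simp add: c_def if_distrib[of "\<lambda>c. scaleC c _"] sum.delta' cong: if_cong)
  qed
  also have "\<dots> = cyc_shift n e"
  proof -
    have nn: "n = Suc (n - 1)" using n2 by simp
    have "(\<Sum>i=1..n. e i (tg i)) = (\<Sum>i=1..n-1. e i (tg i)) + e n (tg n)"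
      by (subst nn, subst sum.cl_ivl_Suc) (use n2 in auto)
    also have "(\<Sum>i=1..n-1. e i (tg i)) = (\<Sum>i=1..n-1. e i (Suc i))"
      by (rule sum.cong) (auto simp: tg_def)
    finally show ?thesis by (simp add: cyc_shift_def tg_def)
  qed
  finally have u: "cyc_shift n e = (\<Sum>i=1..n. \<Sum>j=1..n. scaleC (c i j) (e i j))" by simp
  show ?thesis
    by (rule HH_I[OF u]) (auto simp: c_def tg_def split: if_splits)
qed

end



lemma cstar_gen_sub: "S \<subseteq> T \<Longrightarrow> cstar_subalg T \<Longrightarrow> cstar_gen S \<subseteq> T"
  unfolding cstar_gen_def by blast

lemma list_split2: "Suc i < length xs \<Longrightarrow> xs = take i xs @ xs ! i # xs ! Suc i # drop (Suc (Suc i)) xs"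
  by (metis Cons_nth_drop_Suc Suc_lessD append_take_drop_id)

context fa begin

definition ok :: "bool \<Rightarrow> 'a \<Rightarrow> int \<Rightarrow> bool" where
  "ok b a d \<longleftrightarrow> (if b then a \<in> PP \<and> d = 0 else a \<in> HH d)"
definition wl :: "(bool \<times> 'a \<times> int) list \<Rightarrow> bool" where
  "wl xs \<longleftrightarrow> (\<forall>(b,a,d)\<in>set xs. ok b a d)"
definition vl :: "(bool \<times> 'a \<times> int) list \<Rightarrow> 'a" where
  "vl xs = prod_list (map (\<lambda>(b,a,d). a) xs)"
definition dg :: "(bool \<times> 'a \<times> int) list \<Rightarrow> int" where
  "dg xs = sum_list (map (\<lambda>(b,a,d). d) xs)"
definition cnt :: "(bool \<times> 'a \<times> int) list \<Rightarrow> nat" where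
  "cnt xs = length (filter (\<lambda>(b,a,d). tau a \<noteq> 0) xs)"

lemma vl_simps[simp]: "vl [] = 1" "vl ((b,a,d) # xs) = a * vl xs" "vl (xs @ ys) = vl xs * vl ys"
  by (simp_all add: vl_def)
lemma dg_simps[simp]: "dg [] = 0" "dg ((b,a,d) # xs) = d + dg xs" "dg (xs @ ys) = dg xs + dg ys"
  by (simp_all add: dg_def)
lemma cnt_simps[simp]: "cnt [] = 0" "cnt ((b,a,d) # xs) = (if tau a \<noteq> 0 then Suc (cnt xs) else cnt xs)"
   "cnt (xs @ ys) = cnt xs + cnt ys"
  by (simp_all add: cnt_def)
lemma wl_simps[simp]: "wl [] = True" "wl ((b,a,d) # xs) = (ok b a d \<and> wl xs)" "wl (xs @ ys) = (wl xs \<and> wl ys)"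
  by (simp_all add: wl_def ball_Un)

lemma ok_center: assumes "ok b a d" "tau a \<noteq> 0" shows "ok b (a - scaleC t 1) d" "int n dvd d"
proof -
  show "int n dvd d" using assms HH_tau by (auto simp: ok_def split: if_splits)
  then show "ok b (a - scaleC t 1) d" using assms PP_center HH_center by (auto simp: ok_def split: if_splits)
qed

lemma ok_merge: "ok b a d \<Longrightarrow> ok b a' d' \<Longrightarrow> ok b (a * a') (d + d')"
  using PP_mult HH_mult by (auto simp: ok_def split: if_splits)

lemma ok_cstar: "ok b a d \<Longrightarrow> ok b (cstar a) (- d)"
  using PP_cstar HH_cstar by (auto simp: ok_def split: if_splits)

lemma ok_free: "ok b a d \<Longrightarrow> a \<in> (if b then {\<Sum>j=1..m. scaleC (c j) (p j) | c. True}
                            else {\<Sum>i=1..n. \<Sum>j=1..n. scaleC (c i j) (e i j) | c. True})"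
  by (auto simp: ok_def PP_def HH_def split: if_splits)

lemma vl_map: "prod_list (map snd (map (\<lambda>(b,a,d). (b,a)) xs)) = vl xs"
  by (induction xs) auto

lemma core: "wl xs \<Longrightarrow> \<not> int n dvd dg xs \<Longrightarrow> tau (vl xs) = 0"
proof (induction xs rule: measure_induct_rule[where f="\<lambda>xs. 2 * length xs + cnt xs"])
  case (less xs)
  show ?case
  proof (cases "\<exists>x\<in>set xs. tau (fst (snd x)) \<noteq> 0")
    case True
    then obtain x where "x \<in> set xs" "tau (fst (snd x)) \<noteq> 0" by blast
    then obtain ys b a d zs where xs: "xs = ys @ (b,a,d) # zs" and ta: "tau a \<noteq> 0"
      by (metis split_list prod.collapse)
    define t where "t = tau a"
    define a' where "a' = a - scaleC t 1"
    have okx: "ok b a d" and wys: "wl ys" "wl zs" using less.prems(1) xs by auto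
    have ok': "ok b a' d" unfolding a'_def by (rule ok_center(1)[OF okx ta])
    have nd: "int n dvd d" by (rule ok_center(2)[OF okx ta])
    have ta': "tau a' = 0" by (simp add: a'_def t_def tau_diff tau_scaleC)
    have w1: "wl (ys @ (b,a',d) # zs)" using wys ok' by simp
    have w2: "wl (ys @ zs)" using wys by simp
    have d1: "\<not> int n dvd dg (ys @ (b,a',d) # zs)" using less.prems(2) xs by simp
    have d2: "\<not> int n dvd dg (ys @ zs)"
    proof
      assume "int n dvd dg (ys @ zs)"
      then have "int n dvd dg (ys @ zs) + d" using nd by simp
      then show False using less.prems(2) xs by (simp add: algebra_simps)
    qed
    have i1: "tau (vl (ys @ (b,a',d) # zs)) = 0"
      by (rule less.IH[OF _ w1 d1]) (simp add: xs ta ta')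
    have i2: "tau (vl (ys @ zs)) = 0"
      by (rule less.IH[OF _ w2 d2]) (simp add: xs ta)
    have "vl xs = vl ys * ((a' + scaleC t 1) * vl zs)" by (simp add: xs a'_def)
    also have "\<dots> = vl (ys @ (b,a',d) # zs) + scaleC t (vl (ys @ zs))"
      by (simp add: distrib_left distrib_right scaleC_mult_left scaleC_mult_right mult.assoc)
    finally show ?thesis using i1 i2 by (simp add: tau_add tau_scaleC)
  next
    case False
    then have cen: "\<forall>(b,a,d)\<in>set xs. tau a = 0" by auto
    show ?thesis
    proof (cases "\<exists>ys x y zs. xs = ys @ x # y # zs \<and> fst x = fst y")
      case True
      then obtain ys b a d b' a' d' zs where xs: "xs = ys @ (b,a,d) # (b',a',d') # zs" and bb: "b' = b"
        by (metis prod.collapse fst_conv)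
      let ?x1 = "ys @ (b, a * a', d + d') # zs"
      have w1: "wl ?x1" using less.prems(1) xs bb ok_merge by auto
      have d1: "\<not> int n dvd dg ?x1" using less.prems(2) xs by (simp add: algebra_simps)
      have "tau (vl ?x1) = 0" by (rule less.IH[OF _ w1 d1]) (auto simp: xs)
      moreover have "vl ?x1 = vl xs" by (simp add: xs mult.assoc)
      ultimately show ?thesis by simp
    next
      case False
      have ne: "xs \<noteq> []" using less.prems(2) by auto
      define zs where "zs = map (\<lambda>(b,a,d). (b,a)) xs"
      have "tau (prod_list (map snd zs)) = 0"
      proof (rule free[unfolded free_pair_def, THEN spec, THEN mp, THEN mp, THEN mp])
        show "zs \<noteq> []" using ne by (simp add: zs_def)
        show "\<forall>(b,a)\<in>set zs. a \<in> (if b then {\<Sum>j=1..m. scaleC (c j) (p j) | c. True}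
                            else {\<Sum>i=1..n. \<Sum>j=1..n. scaleC (c i j) (e i j) | c. True}) \<and> tau a = 0"
          using less.prems(1) cen ok_free unfolding zs_def wl_def by fastforce
        show "\<forall>i. Suc i < length zs \<longrightarrow> fst (zs ! i) \<noteq> fst (zs ! Suc i)"
        proof (intro allI impI)
          fix i assume i: "Suc i < length zs"
          then have i': "Suc i < length xs" by (simp add: zs_def)
          have "fst (xs ! i) \<noteq> fst (xs ! Suc i)"
            using False list_split2[OF i'] by blast
          then show "fst (zs ! i) \<noteq> fst (zs ! Suc i)" using i'
            by (simp add: zs_def case_prod_beta)
        qed
      qed
      moreover have "prod_list (map snd zs) = vl xs"
        unfolding zs_def by (rule vl_map)
      ultimately show ?thesis by simp
    qed
  qed
qed

inductive_set SP :: "int \<Rightarrow> int \<Rightarrow> 'a set" for q :: int and r :: int where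
  SP_word: "wl xs \<Longrightarrow> q dvd (dg xs - r) \<Longrightarrow> vl xs \<in> SP q r"
| SP_zero: "0 \<in> SP q r"
| SP_add: "x \<in> SP q r \<Longrightarrow> y \<in> SP q r \<Longrightarrow> x + y \<in> SP q r"
| SP_sc: "x \<in> SP q r \<Longrightarrow> scaleC c x \<in> SP q r"

lemma SP_mult: assumes "x \<in> SP q r" "y \<in> SP q r'" shows "x * y \<in> SP q (r + r')"
  using assms
proof (induction x rule: SP.induct)
  case (SP_word xs)
  from SP_word.prems show ?case
  proof (induction y rule: SP.induct)
    case (SP_word ys)
    have "vl xs * vl ys = vl (xs @ ys)" by simp
    moreover have "wl (xs @ ys)" using SP_word.hyps \<open>wl xs\<close> by simp
    moreover have "q dvd (dg (xs @ ys) - (r + r'))"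
    proof -
      have "q dvd ((dg xs - r) + (dg ys - r'))" using SP_word.hyps \<open>q dvd (dg xs - r)\<close> by simp
      then show ?thesis by (simp add: algebra_simps)
    qed
    ultimately show ?case by (metis SP.SP_word)
  next
    case SP_zero then show ?case by (simp add: SP.SP_zero)
  next
    case (SP_add x y) then show ?case by (simp add: distrib_left SP.SP_add)
  next
    case (SP_sc x c) then show ?case by (simp add: scaleC_mult_right SP.SP_sc)
  qed
next
  case SP_zero then show ?case by (simp add: SP.SP_zero)
next
  case (SP_add x y) then show ?case by (simp add: distrib_right SP.SP_add)
next
  case (SP_sc x c) then show ?case by (simp add: scaleC_mult_left SP.SP_sc)
qed

definition cst :: "bool \<times> 'a \<times> int \<Rightarrow> bool \<times> 'a \<times> int" where
  "cst x = (case x of (b,a,d) \<Rightarrow> (b, cstar a, - d))"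

lemma cst_props: "cstar (vl xs) = vl (rev (map cst xs)) \<and> dg (rev (map cst xs)) = - dg xs \<and>
   (wl xs \<longrightarrow> wl (rev (map cst xs)))"
  by (induction xs) (auto simp: cst_def cstar_mult ok_cstar)

lemma SP_cstar: assumes "x \<in> SP q r" shows "cstar x \<in> SP q (- r)"
  using assms
proof (induction x rule: SP.induct)
  case (SP_word xs)
  have eq: "dg (rev (map cst xs)) - (- r) = - (dg xs - r)" using cst_props[of xs] by simp
  have "q dvd (dg (rev (map cst xs)) - (- r))" unfolding eq dvd_minus_iff by (rule SP_word.hyps(2))
  then show ?case using cst_props[of xs] SP_word by (metis SP.SP_word)
next
  case SP_zero then show ?case by (simp add: SP.SP_zero)
next
  case (SP_add x y) then show ?case by (simp add: cstar_add SP.SP_add)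
next
  case (SP_sc x c) then show ?case by (simp add: cstar_scaleC SP.SP_sc)
qed

lemma SP_tau: assumes "q dvd int n" "\<not> q dvd r" "x \<in> SP q r" shows "tau x = 0"
  using assms(3)
proof (induction x rule: SP.induct)
  case (SP_word xs)
  have "\<not> int n dvd dg xs"
  proof
    assume "int n dvd dg xs"
    have "q dvd dg xs" using assms(1) \<open>int n dvd dg xs\<close> by (rule dvd_trans)
    then have "q dvd (dg xs - (dg xs - r))" using SP_word(2) by (rule dvd_diff)
    then show False using assms(2) by simp
  qed
  then show ?case using SP_word core by blast
qed (simp_all add: tau_add tau_scaleC)

lemma SP_cong: assumes "q dvd (r - r')" "x \<in> SP q r" shows "x \<in> SP q r'"
  using assms(2)
proof (induction x rule: SP.induct)
  case (SP_word xs)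
  have "q dvd ((dg xs - r) + (r - r'))" using SP_word assms(1) by (intro dvd_add) auto
  then have "q dvd (dg xs - r')" by simp
  then show ?case using SP_word by (simp add: SP.SP_word)
qed (auto intro: SP.intros)

lemma SP_single: "ok b a d \<Longrightarrow> q dvd (d - r) \<Longrightarrow> a \<in> SP q r"
  using SP_word[of "[(b,a,d)]" q r] by simp

lemma SP_one: "1 \<in> SP q 0"
  using SP_word[of "[]" q 0] by simp

definition CL :: "int \<Rightarrow> int \<Rightarrow> 'a set" where "CL q r = closure (SP q r)"

lemma SP_CL: "x \<in> SP q r \<Longrightarrow> x \<in> CL q r"
  unfolding CL_def using closure_subset by blast

lemma CL_mult: assumes "x \<in> CL q r" "y \<in> CL q r'" shows "x * y \<in> CL q (r + r')"
proof -
  obtain X where X: "\<And>i. X i \<in> SP q r" "X \<longlonglongrightarrow> x" using assms(1) by (auto simp: CL_def closure_sequential)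
  obtain Y where Y: "\<And>i. Y i \<in> SP q r'" "Y \<longlonglongrightarrow> y" using assms(2) by (auto simp: CL_def closure_sequential)
  have lim: "(\<lambda>i. X i * Y i) \<longlonglongrightarrow> x * y" by (rule tendsto_mult[OF X(2) Y(2)])
  have mem: "\<And>i. X i * Y i \<in> SP q (r + r')" using X(1) Y(1) by (rule SP_mult)
  show ?thesis unfolding CL_def closure_sequential
    by (rule exI[of _ "\<lambda>i. X i * Y i"]) (use lim mem in auto)
qed

lemma CL_add: assumes "x \<in> CL q r" "y \<in> CL q r" shows "x + y \<in> CL q r"
proof -
  obtain X where X: "\<And>i. X i \<in> SP q r" "X \<longlonglongrightarrow> x" using assms(1) by (auto simp: CL_def closure_sequential)
  obtain Y where Y: "\<And>i. Y i \<in> SP q r" "Y \<longlonglongrightarrow> y" using assms(2) by (auto simp: CL_def closure_sequential)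
  have lim: "(\<lambda>i. X i + Y i) \<longlonglongrightarrow> x + y" by (rule tendsto_add[OF X(2) Y(2)])
  have mem: "\<And>i. X i + Y i \<in> SP q r" using X(1) Y(1) by (rule SP_add)
  show ?thesis unfolding CL_def closure_sequential
    by (rule exI[of _ "\<lambda>i. X i + Y i"]) (use lim mem in auto)
qed

lemma CL_sc: assumes "x \<in> CL q r" shows "scaleC c x \<in> CL q r"
proof -
  obtain X where X: "\<And>i. X i \<in> SP q r" "X \<longlonglongrightarrow> x" using assms(1) by (auto simp: CL_def closure_sequential)
  have "(\<lambda>i. cz c * X i) \<longlonglongrightarrow> cz c * x" by (rule tendsto_mult[OF tendsto_const X(2)])
  then have lim: "(\<lambda>i. scaleC c (X i)) \<longlonglongrightarrow> scaleC c x" by (simp add: scaleC_cz)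
  have mem: "\<And>i. scaleC c (X i) \<in> SP q r" using X(1) by (rule SP_sc)
  show ?thesis unfolding CL_def closure_sequential
    by (rule exI[of _ "\<lambda>i. scaleC c (X i)"]) (use lim mem in auto)
qed

lemma CL_cstar: assumes "x \<in> CL q r" shows "cstar x \<in> CL q (- r)"
proof -
  obtain X where X: "\<And>i. X i \<in> SP q r" "X \<longlonglongrightarrow> x" using assms(1) by (auto simp: CL_def closure_sequential)
  have lim: "(\<lambda>i. cstar (X i)) \<longlonglongrightarrow> cstar x" by (rule bounded_linear.tendsto[OF bounded_linear_cstar X(2)])
  have mem: "\<And>i. cstar (X i) \<in> SP q (- r)" using X(1) by (rule SP_cstar)
  show ?thesis unfolding CL_def closure_sequential
    by (rule exI[of _ "\<lambda>i. cstar (X i)"]) (use lim mem in auto)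
qed

lemma CL_tau: assumes "q dvd int n" "\<not> q dvd r" "x \<in> CL q r" shows "tau x = 0"
  using tau_closure_zero[of "SP q r" x] SP_tau[OF assms(1,2)] assms(3) by (auto simp: CL_def)

lemma CL_subalg: "cstar_subalg (CL q 0)"
  unfolding cstar_subalg_def
  using SP_CL[OF SP.SP_zero] CL_add CL_mult[of _ q 0 _ 0] CL_sc CL_cstar[of _ q 0]
  by (auto simp: CL_def)

abbreviation "u \<equiv> cyc_shift n e"

lemma u_pow_SP: "u ^ k \<in> SP q (- int k)"
proof (induction k)
  case 0 then show ?case using SP_one by simp
next
  case (Suc k)
  have "u \<in> SP q (-1)" using u_HH by (intro SP_single[of False]) (auto simp: ok_def)
  from SP_mult[OF this Suc] have "u * u ^ k \<in> SP q (-1 + - int k)" .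
  moreover have "-1 + - int k = - int (Suc k)" by simp
  ultimately show ?case by simp
qed

lemma gen1: "j \<in> {1..m} \<Longrightarrow> u ^ k * p j * cstar u ^ k \<in> SP q 0"
proof -
  assume j: "j \<in> {1..m}"
  have a: "u ^ k \<in> SP q (- int k)" by (rule u_pow_SP)
  have b: "p j \<in> SP q 0" using p_PP[OF j] by (intro SP_single[of True]) (auto simp: ok_def)
  have c: "cstar u ^ k \<in> SP q (- (- int k))" unfolding cstar_power[symmetric] by (rule SP_cstar[OF a])
  have "u ^ k * p j * cstar u ^ k \<in> SP q ((- int k + 0) + (- (- int k)))" by (rule SP_mult[OF SP_mult[OF a b] c])
  then show ?thesis by simp
qed

lemma gen2: "i \<in> {1..n} \<Longrightarrow> e i i \<in> SP q 0"
  using e_HH[of i i] by (intro SP_single[of False]) (auto simp: ok_def)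

lemma perp_main:
  fixes Q :: nat
  assumes Qn: "Q dvd n" and G: "G \<subseteq> CL (int Q) 0" and k: "k1 < Q" "k2 < Q" "k1 \<noteq> k2"
  shows "gns_perp tau (u ^ k1) (cstar_gen G) (u ^ k2) (cstar_gen G)"
  unfolding gns_perp_def
proof (intro allI impI)
  fix X Y :: "nat \<Rightarrow> 'a"
  assume X: "range X \<subseteq> cstar_gen G" and Y: "range Y \<subseteq> cstar_gen G"
  have sub: "cstar_gen G \<subseteq> CL (int Q) 0" by (rule cstar_gen_sub[OF G CL_subalg])
  have nd: "\<not> int Q dvd (int k2 - int k1)"
  proof
    assume "int Q dvd (int k2 - int k1)"
    then have "int Q dvd \<bar>int k2 - int k1\<bar>" by simp
    moreover have "0 < \<bar>int k2 - int k1\<bar>" "\<bar>int k2 - int k1\<bar> < int Q" using k by auto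
    ultimately show False using zdvd_not_zless by blast
  qed
  have Qn': "int Q dvd int n" using Qn by simp
  have "tau (cstar (u ^ k2 * Y i) * (u ^ k1 * X i)) = 0" for i
  proof -
    have xi: "X i \<in> CL (int Q) 0" and yi: "Y i \<in> CL (int Q) 0" using X Y sub by auto
    have a: "cstar (Y i) \<in> CL (int Q) 0" using CL_cstar[OF yi] by simp
    have b: "cstar (u ^ k2) \<in> CL (int Q) (- (- int k2))" by (rule CL_cstar[OF SP_CL[OF u_pow_SP]])
    have c: "u ^ k1 \<in> CL (int Q) (- int k1)" by (rule SP_CL[OF u_pow_SP])
    have "cstar (Y i) * (cstar (u ^ k2) * (u ^ k1 * X i)) \<in> CL (int Q) (0 + (- (- int k2) + (- int k1 + 0)))"
      by (rule CL_mult[OF a CL_mult[OF b CL_mult[OF c xi]]])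
    moreover have "cstar (u ^ k2 * Y i) * (u ^ k1 * X i) = cstar (Y i) * (cstar (u ^ k2) * (u ^ k1 * X i))"
      by (simp add: cstar_mult mult.assoc)
    moreover have "\<not> int Q dvd (0 + (- (- int k2) + (- int k1 + 0)))" using nd by simp
    ultimately show ?thesis using CL_tau[OF Qn'] by metis
  qed
  then show "(\<lambda>i. tau (cstar (u ^ k2 * Y i) * (u ^ k1 * X i))) \<longlonglongrightarrow> 0" by simp
qed

end



theorem corollary3p3:
  fixes n m :: nat
    and alpha :: "nat \<Rightarrow> real"
    and p :: "nat \<Rightarrow> 'a::cstar_algebra"
    and e :: "nat \<Rightarrow> nat \<Rightarrow> 'a"
    and tau :: "'a \<Rightarrow> complex"
  assumes n2: "n \<ge> 2"
    and alpha_pos: "\<forall>j\<in>{1..m}. alpha j > 0"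
    and alpha_mono: "\<forall>j. 1 \<le> j \<and> j < m \<longrightarrow> alpha j \<le> alpha (Suc j)"
    and alpha_sum: "(\<Sum>j=1..m. alpha j) = 1"
    and tau_state: "faithful_tracial_state tau"
    and p_proj: "\<forall>j\<in>{1..m}. p j * p j = p j \<and> cstar (p j) = p j"
    and p_orth: "\<forall>j\<in>{1..m}. \<forall>k\<in>{1..m}. j \<noteq> k \<longrightarrow> p j * p k = 0"
    and p_sum: "(\<Sum>j=1..m. p j) = 1"
    and e_mult: "\<forall>i\<in>{1..n}. \<forall>j\<in>{1..n}. \<forall>k\<in>{1..n}. \<forall>l\<in>{1..n}.
                   e i j * e k l = (if j = k then e i l else 0)"
    and e_adj: "\<forall>i\<in>{1..n}. \<forall>j\<in>{1..n}. cstar (e i j) = e j i"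
    and e_sum: "(\<Sum>i=1..n. e i i) = 1"
    and tau_p: "\<forall>j\<in>{1..m}. tau (p j) = complex_of_real (alpha j)"
    and tau_e: "\<forall>i\<in>{1..n}. \<forall>j\<in>{1..n}. tau (e i j) = (if i = j then 1 / of_nat n else 0)"
    and free: "free_pair tau {\<Sum>j=1..m. scaleC (c j) (p j) | c. True}
                            {\<Sum>i=1..n. \<Sum>j=1..n. scaleC (c i j) (e i j) | c. True}"
    and generated: "cstar_gen ({p j | j. j \<in> {1..m}} \<union> {e i j | i j. i \<in> {1..n} \<and> j \<in> {1..n}})
                      = UNIV"
  shows
    "(let u = cyc_shift n e;
          B = cstar_gen ({u ^ k * p j * cstar u ^ k | k j. k < n \<and> j \<in> {1..m}}
                         \<union> {e i i | i. i \<in> {1..n}})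
      in \<forall>k1 k2. k1 < n \<and> k2 < n \<and> k1 \<noteq> k2 \<longrightarrow> gns_perp tau (u ^ k1) B (u ^ k2) B)
     \<and>
     (\<forall>l. l dvd n \<and> 1 < l \<and> l < n \<longrightarrow>
       (let u = cyc_shift n e;
            E = cstar_gen ({u ^ k * p j * cstar u ^ k | k j. k < l \<and> j \<in> {1..m}}
                           \<union> {e i i | i. i \<in> {1..n}}
                           \<union> {u ^ (l * t) | t. 1 \<le> t \<and> t < n div l})
        in \<forall>k1 k2. k1 < l \<and> k2 < l \<and> k1 \<noteq> k2 \<longrightarrow> gns_perp tau (u ^ k1) E (u ^ k2) E))"
proof -
  have "fa tau n m p e"
    unfolding fa_def fa_axioms_def ftau_def
    using tau_state n2 p_proj p_orth p_sum e_mult e_adj e_sum tau_e free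
    by blast
  then interpret F: fa tau n m p e .
  have part1: "\<forall>k1 k2. k1 < n \<and> k2 < n \<and> k1 \<noteq> k2 \<longrightarrow>
      gns_perp tau (cyc_shift n e ^ k1)
        (cstar_gen ({cyc_shift n e ^ k * p j * cstar (cyc_shift n e) ^ k | k j. k < n \<and> j \<in> {1..m}}
                         \<union> {e i i | i. i \<in> {1..n}}))
        (cyc_shift n e ^ k2)
        (cstar_gen ({cyc_shift n e ^ k * p j * cstar (cyc_shift n e) ^ k | k j. k < n \<and> j \<in> {1..m}}
                         \<union> {e i i | i. i \<in> {1..n}}))"
  proof (intro allI impI)
    fix k1 k2 assume k: "k1 < n \<and> k2 < n \<and> k1 \<noteq> k2"
    show "gns_perp tau (cyc_shift n e ^ k1)
        (cstar_gen ({cyc_shift n e ^ k * p j * cstar (cyc_shift n e) ^ k | k j. k < n \<and> j \<in> {1..m}}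
                         \<union> {e i i | i. i \<in> {1..n}}))
        (cyc_shift n e ^ k2)
        (cstar_gen ({cyc_shift n e ^ k * p j * cstar (cyc_shift n e) ^ k | k j. k < n \<and> j \<in> {1..m}}
                         \<union> {e i i | i. i \<in> {1..n}}))"
    proof (rule F.perp_main[of n])
      show "({cyc_shift n e ^ k * p j * cstar (cyc_shift n e) ^ k | k j. k < n \<and> j \<in> {1..m}}
                         \<union> {e i i | i. i \<in> {1..n}}) \<subseteq> F.CL (int n) 0"
        using F.SP_CL[OF F.gen1] F.SP_CL[OF F.gen2] by blast
    qed (use k in auto)
  qed
  have part2: "\<forall>l. l dvd n \<and> 1 < l \<and> l < n \<longrightarrow> (\<forall>k1 k2. k1 < l \<and> k2 < l \<and> k1 \<noteq> k2 \<longrightarrow>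
      gns_perp tau (cyc_shift n e ^ k1)
        (cstar_gen ({cyc_shift n e ^ k * p j * cstar (cyc_shift n e) ^ k | k j. k < l \<and> j \<in> {1..m}}
                           \<union> {e i i | i. i \<in> {1..n}}
                           \<union> {cyc_shift n e ^ (l * t) | t. 1 \<le> t \<and> t < n div l}))
        (cyc_shift n e ^ k2)
        (cstar_gen ({cyc_shift n e ^ k * p j * cstar (cyc_shift n e) ^ k | k j. k < l \<and> j \<in> {1..m}}
                           \<union> {e i i | i. i \<in> {1..n}}
                           \<union> {cyc_shift n e ^ (l * t) | t. 1 \<le> t \<and> t < n div l})))"
  proof (intro allI impI)
    fix l k1 k2 assume l: "l dvd n \<and> 1 < l \<and> l < n" and k: "k1 < l \<and> k2 < l \<and> k1 \<noteq> k2"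
    have upow: "cyc_shift n e ^ (l * t) \<in> F.CL (int l) 0" for t
    proof -
      have "cyc_shift n e ^ (l * t) \<in> F.SP (int l) (- int (l * t))" by (rule F.u_pow_SP)
      moreover have "int l dvd (- int (l * t) - 0)" by simp
      ultimately show ?thesis using F.SP_cong F.SP_CL by blast
    qed
    show "gns_perp tau (cyc_shift n e ^ k1)
        (cstar_gen ({cyc_shift n e ^ k * p j * cstar (cyc_shift n e) ^ k | k j. k < l \<and> j \<in> {1..m}}
                           \<union> {e i i | i. i \<in> {1..n}}
                           \<union> {cyc_shift n e ^ (l * t) | t. 1 \<le> t \<and> t < n div l}))
        (cyc_shift n e ^ k2)
        (cstar_gen ({cyc_shift n e ^ k * p j * cstar (cyc_shift n e) ^ k | k j. k < l \<and> j \<in> {1..m}}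
                           \<union> {e i i | i. i \<in> {1..n}}
                           \<union> {cyc_shift n e ^ (l * t) | t. 1 \<le> t \<and> t < n div l}))"
    proof (rule F.perp_main[of l])
      show "({cyc_shift n e ^ k * p j * cstar (cyc_shift n e) ^ k | k j. k < l \<and> j \<in> {1..m}}
                           \<union> {e i i | i. i \<in> {1..n}}
                           \<union> {cyc_shift n e ^ (l * t) | t. 1 \<le> t \<and> t < n div l}) \<subseteq> F.CL (int l) 0"
        using F.SP_CL[OF F.gen1] F.SP_CL[OF F.gen2] upow by blast
    qed (use k l in auto)
  qed
  show ?thesis unfolding Let_def using part1 part2 by blast
qed


end
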